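(* Let $\varphi:X\to\mathbb R$ be Lipschitz continuous and let $u$ be a calibrated subaction of $\varphi$. If $\underline{x},\underline{z}\in\Omega_\varphi$ satisfy $H_\varphi(\underline{x},\underline{z})+H_\varphi(\underline{z},\underline{x})=0$, then \[H_\varphi(\underline{x},\underline{y})+u(\underline{x})=H_\varphi(\underline{z},\underline{y})+u(\underline{z})\quad\text{for every }\underline{y}\in X.\]
   Context: $X=[0,1]^{\mathbb N_0}$ with metric $d_X(\underline{x},\underline{y})=\sum_{i\ge0}|x_i-y_i|/2^{i+1}$ and shift $\sigma(\underline{x})_i=x_{i+1}$. $\alpha_\varphi=\inf_\mu\int\varphi\,d\mu$ over $\sigma$-invariant Borel probability measures. $B(\underline{x},\underline{y},n;\varepsilon)=\{\underline{z}: d_X(\underline{x},\underline{z})<\varepsilon,\ d_X(\sigma^n\underline{z},\underline{y})<\varepsilon\}$. Mañé potential $S_\varphi(\underline{x},\underline{y})=\lim_{\varepsilon\to0}\inf\{\sum_{i=0}^{n-1}(\varphi(\sigma^i\underline{z})-\alpha_\varphi): n\in\mathbb N,\ \underline{z}\in B(\underline{x},\underline{y},n;\varepsilon)\}$; Peierls barrier $H_\varphi(\underline{x},\underline{y})=\lim_{\varepsilon\to0}\liminf_{n\to\infty}\inf\{\sum_{i=0}^{n-1}(\varphi(\sigma^i\underline{z})-\alpha_\varphi): \underline{z}\in B(\underline{x},\underline{y},n;\varepsilon)\}\in\mathbb R\cup\{+\infty\}$; Aubry set $\Omega_\varphi=\{\underline{x}: S_\varphi(\underline{x},\underline{x})=0\}$.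 A subaction is a continuous $u$ with $u(\underline{x})+\varphi(\underline{x})\ge u(\sigma\underline{x})+\alpha_\varphi$ for all $\underline{x}$; it is calibrated if $\min_{\sigma(\underline{y})=\underline{x}}(\varphi(\underline{y})+u(\underline{y}))=u(\underline{x})+\alpha_\varphi$ for every $\underline{x}$. *)

theory Defs
  imports "HOL-Probability.Probability"
begin

definition Xsp :: "(nat \<Rightarrow> real) set" where
  "Xsp = {x. \<forall>i. 0 \<le> x i \<and> x i \<le> 1}"

definition dX :: "(nat \<Rightarrow> real) \<Rightarrow> (nat \<Rightarrow> real) \<Rightarrow> real" where
  "dX x y = (\<Sum>i. \<bar>x i - y i\<bar> / 2 ^ (i + 1))"

definition shift :: "(nat \<Rightarrow> real) \<Rightarrow> (nat \<Rightarrow> real)" where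
  "shift x = (\<lambda>i. x (Suc i))"

definition lipschitz_X :: "((nat \<Rightarrow> real) \<Rightarrow> real) \<Rightarrow> bool" where
  "lipschitz_X f \<longleftrightarrow> (\<exists>L. \<forall>x\<in>Xsp. \<forall>y\<in>Xsp. \<bar>f x - f y\<bar> \<le> L * dX x y)"

definition continuous_X :: "((nat \<Rightarrow> real) \<Rightarrow> real) \<Rightarrow> bool" where
  "continuous_X f \<longleftrightarrow> (\<forall>x\<in>Xsp. \<forall>e>0. \<exists>\<delta>>0. \<forall>y\<in>Xsp. dX x y < \<delta> \<longrightarrow> \<bar>f y - f x\<bar> < e)"

text \<open>Shift-invariant Borel probability measures on X (Borel sets of X, whose
  dX-topology coincides with the subspace product topology).\<close>
definition invariant_measures :: "(nat \<Rightarrow> real) measure set" where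
  "invariant_measures = {M. space M = Xsp \<and> sets M = sets (restrict_space borel Xsp)
      \<and> prob_space M \<and> shift \<in> measurable M M \<and> distr M M shift = M}"

definition alpha :: "((nat \<Rightarrow> real) \<Rightarrow> real) \<Rightarrow> real" where
  "alpha \<phi> = (INF M\<in>invariant_measures. integral\<^sup>L M \<phi>)"

definition Bset :: "(nat \<Rightarrow> real) \<Rightarrow> (nat \<Rightarrow> real) \<Rightarrow> nat \<Rightarrow> real \<Rightarrow> (nat \<Rightarrow> real) set" where
  "Bset x y n \<epsilon> = {z\<in>Xsp. dX x z < \<epsilon> \<and> dX ((shift ^^ n) z) y < \<epsilon>}"

definition birk :: "((nat \<Rightarrow> real) \<Rightarrow> real) \<Rightarrow> nat \<Rightarrow> (nat \<Rightarrow> real) \<Rightarrow> real" where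
  "birk \<phi> n z = (\<Sum>i<n. \<phi> ((shift ^^ i) z) - alpha \<phi>)"

definition mane :: "((nat \<Rightarrow> real) \<Rightarrow> real) \<Rightarrow> (nat \<Rightarrow> real) \<Rightarrow> (nat \<Rightarrow> real) \<Rightarrow> ereal" where
  "mane \<phi> x y = Lim (at_right (0::real))
     (\<lambda>\<epsilon>. INF p\<in>{(n, z). n \<ge> 1 \<and> z \<in> Bset x y n \<epsilon>}. ereal (birk \<phi> (fst p) (snd p)))"

definition peierls :: "((nat \<Rightarrow> real) \<Rightarrow> real) \<Rightarrow> (nat \<Rightarrow> real) \<Rightarrow> (nat \<Rightarrow> real) \<Rightarrow> ereal" where
  "peierls \<phi> x y = Lim (at_right (0::real))
     (\<lambda>\<epsilon>. liminf (\<lambda>n. INF z\<in>Bset x y n \<epsilon>. ereal (birk \<phi> n z)))"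

definition aubry :: "((nat \<Rightarrow> real) \<Rightarrow> real) \<Rightarrow> (nat \<Rightarrow> real) set" where
  "aubry \<phi> = {x\<in>Xsp. mane \<phi> x x = 0}"

definition subaction :: "((nat \<Rightarrow> real) \<Rightarrow> real) \<Rightarrow> ((nat \<Rightarrow> real) \<Rightarrow> real) \<Rightarrow> bool" where
  "subaction \<phi> u \<longleftrightarrow> continuous_X u \<and>
     (\<forall>x\<in>Xsp. u x + \<phi> x \<ge> u (shift x) + alpha \<phi>)"

definition calibrated_subaction :: "((nat \<Rightarrow> real) \<Rightarrow> real) \<Rightarrow> ((nat \<Rightarrow> real) \<Rightarrow> real) \<Rightarrow> bool" where
  "calibrated_subaction \<phi> u \<longleftrightarrow> subaction \<phi> u \<and>
     (\<forall>x\<in>Xsp. (\<exists>y\<in>Xsp. shift y = x \<and> \<phi> y + u y = u x + alpha \<phi>) \<and>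
               (\<forall>y\<in>Xsp. shift y = x \<longrightarrow> \<phi> y + u y \<ge> u x + alpha \<phi>))"

end

theory Submission
  imports Defs
begin

lemma shift_pow: "(shift ^^ k) v = (\<lambda>i. v (i + k))"
  by (induction k arbitrary: v) (auto simp: shift_def)

lemma shift_Xsp: "v \<in> Xsp \<Longrightarrow> (shift ^^ k) v \<in> Xsp"
  by (simp add: shift_pow Xsp_def)

lemma dX_summable:
  assumes "x \<in> Xsp" "y \<in> Xsp"
  shows "summable (\<lambda>i. \<bar>x i - y i\<bar> / 2 ^ (i + 1))"
proof (rule summable_comparison_test)
  show "\<exists>N. \<forall>n\<ge>N. norm (\<bar>x n - y n\<bar> / 2 ^ (n + 1)) \<le> (1/2) * (1/2) ^ n"
  proof (intro exI allI impI)
    fix n :: nat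
    have "0 \<le> x n" "x n \<le> 1" "0 \<le> y n" "y n \<le> 1" using assms by (auto simp: Xsp_def)
    then have "\<bar>x n - y n\<bar> \<le> 1" by linarith
    then show "norm (\<bar>x n - y n\<bar> / 2 ^ (n + 1)) \<le> (1/2) * (1/2) ^ n"
      by (simp add: power_one_over divide_right_mono)
  qed
  show "summable (\<lambda>n. (1/2::real) * (1/2) ^ n)"
    by (intro summable_mult summable_geometric) auto
qed

lemma dX_sym: "dX x y = dX y x"
  unfolding dX_def by (simp add: abs_minus_commute)

lemma dX_nonneg: "x \<in> Xsp \<Longrightarrow> y \<in> Xsp \<Longrightarrow> 0 \<le> dX x y"
  unfolding dX_def by (intro suminf_nonneg dX_summable) auto

lemma dX_triangle:
  assumes "x \<in> Xsp" "y \<in> Xsp" "z \<in> Xsp"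
  shows "dX x y \<le> dX x z + dX z y"
proof -
  have "dX x z + dX z y = (\<Sum>i. \<bar>x i - z i\<bar> / 2 ^ (i + 1) + \<bar>z i - y i\<bar> / 2 ^ (i + 1))"
    unfolding dX_def using assms by (intro suminf_add dX_summable) auto
  moreover have "dX x y \<le> (\<Sum>i. \<bar>x i - z i\<bar> / 2 ^ (i + 1) + \<bar>z i - y i\<bar> / 2 ^ (i + 1))"
    unfolding dX_def
  proof (rule suminf_le)
    fix i show "\<bar>x i - y i\<bar> / 2 ^ (i + 1) \<le> \<bar>x i - z i\<bar> / 2 ^ (i + 1) + \<bar>z i - y i\<bar> / 2 ^ (i + 1)"
      by (simp add: add_divide_distrib[symmetric] divide_right_mono)
  next
    show "summable (\<lambda>i. \<bar>x i - y i\<bar> / 2 ^ (i + 1))" by (rule dX_summable[OF assms(1,2)])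
  next
    show "summable (\<lambda>i. \<bar>x i - z i\<bar> / 2 ^ (i + 1) + \<bar>z i - y i\<bar> / 2 ^ (i + 1))"
      by (rule summable_add; rule dX_summable) (use assms in auto)
  qed
  ultimately show ?thesis by simp
qed

lemma dX_agree:
  assumes "v \<in> Xsp" "v' \<in> Xsp" "\<And>i. i < k \<Longrightarrow> v i = v' i"
  shows "dX v v' = dX ((shift ^^ k) v) ((shift ^^ k) v') / 2 ^ k"
proof -
  let ?f = "\<lambda>i. \<bar>v i - v' i\<bar> / 2 ^ (i + 1)"
  have "dX v v' = (\<Sum>n. ?f (n + k)) + (\<Sum>i<k. ?f i)"
    unfolding dX_def using assms by (intro suminf_split_initial_segment dX_summable) auto
  also have "(\<Sum>i<k. ?f i) = 0" using assms(3) by simp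
  also have "(\<Sum>n. ?f (n + k)) = (\<Sum>n. \<bar>v (n + k) - v' (n + k)\<bar> / 2 ^ (n + 1) / 2 ^ k)"
    by (simp add: power_add field_simps)
  also have "\<dots> = (\<Sum>n. \<bar>v (n + k) - v' (n + k)\<bar> / 2 ^ (n + 1)) / 2 ^ k"
    using dX_summable[OF shift_Xsp[OF assms(1)] shift_Xsp[OF assms(2)], of k]
    by (intro suminf_divide) (simp add: shift_pow)
  finally show ?thesis by (simp add: dX_def shift_pow)
qed

lemma birk_add: "birk \<phi> (n + m) w = birk \<phi> n w + birk \<phi> m ((shift ^^ n) w)"
  by (induction m) (simp_all add: birk_def shift_pow ac_simps)

lemma birk_lower:
  assumes "subaction \<phi> u" "w \<in> Xsp"
  shows "birk \<phi> n w \<ge> u ((shift ^^ n) w) - u w"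
proof (induction n)
  case 0 then show ?case by (simp add: birk_def)
next
  case (Suc n)
  have "u ((shift ^^ n) w) + \<phi> ((shift ^^ n) w) \<ge> u (shift ((shift ^^ n) w)) + alpha \<phi>"
    using assms(1) shift_Xsp[OF assms(2), of n] unfolding subaction_def by blast
  moreover have "u ((shift ^^ Suc n) w) = u (shift ((shift ^^ n) w))" by simp
  moreover have "birk \<phi> (Suc n) w = birk \<phi> n w + (\<phi> ((shift ^^ n) w) - alpha \<phi>)"
    by (simp add: birk_def)
  ultimately show ?case using Suc by linarith
qed

lemma geom_le1: "(\<Sum>i<n. 1 / 2 ^ (n - i) :: real) \<le> 1"
proof (induction n)
  case 0 then show ?case by simp
next
  case (Suc n)
  have "(\<Sum>i<Suc n. 1 / 2 ^ (Suc n - i) :: real) = (\<Sum>i<n. 1 / 2 ^ (n - i)) / 2 + 1/2"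
  proof -
    have "(\<Sum>i<n. 1 / 2 ^ (Suc n - i) :: real) = (\<Sum>i<n. 1 / 2 ^ (n - i) / 2)"
      by (intro sum.cong) (auto simp: Suc_diff_le)
    then show ?thesis by (simp add: sum_divide_distrib)
  qed
  then show ?case using Suc by simp
qed


definition gP :: "((nat \<Rightarrow> real) \<Rightarrow> real) \<Rightarrow> (nat \<Rightarrow> real) \<Rightarrow> (nat \<Rightarrow> real) \<Rightarrow> real \<Rightarrow> ereal" where
  "gP \<phi> x y \<epsilon> = liminf (\<lambda>n. INF z\<in>Bset x y n \<epsilon>. ereal (birk \<phi> n z))"

lemma Bset_mono: "e1 \<le> e2 \<Longrightarrow> Bset x y n e1 \<subseteq> Bset x y n e2"
  by (auto simp: Bset_def)

lemma gP_mono: "e1 \<le> e2 \<Longrightarrow> gP \<phi> x y e2 \<le> gP \<phi> x y e1"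
  unfolding gP_def
  by (intro Liminf_mono always_eventually allI INF_superset_mono Bset_mono order_refl)

lemma peierls_SUP: "peierls \<phi> x y = (SUP \<epsilon>\<in>{0<..}. gP \<phi> x y \<epsilon>)"
proof -
  have "((\<lambda>\<epsilon>. gP \<phi> x y \<epsilon>) \<longlongrightarrow> (SUP \<epsilon>\<in>{0<..}. gP \<phi> x y \<epsilon>)) (at_right 0)"
  proof (rule increasing_tendsto)
    show "\<forall>\<^sub>F \<epsilon> in at_right 0. gP \<phi> x y \<epsilon> \<le> (SUP \<epsilon>\<in>{0<..}. gP \<phi> x y \<epsilon>)"
      by (rule eventually_mono[OF eventually_at_right_real[of 0 1]]) (auto intro: SUP_upper)
  next
    fix c assume "c < (SUP \<epsilon>\<in>{0<..}. gP \<phi> x y \<epsilon>)"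
    then obtain e0 where e0: "e0 > 0" "c < gP \<phi> x y e0" by (auto simp: less_SUP_iff)
    show "\<forall>\<^sub>F \<epsilon> in at_right 0. c < gP \<phi> x y \<epsilon>"
    proof (rule eventually_mono[OF eventually_at_right_real[OF e0(1)]])
      fix \<epsilon> :: real assume "\<epsilon> \<in> {0<..<e0}"
      then have "gP \<phi> x y e0 \<le> gP \<phi> x y \<epsilon>" by (intro gP_mono) auto
      then show "c < gP \<phi> x y \<epsilon>" by (rule less_le_trans[OF e0(2)])
    qed
  qed
  then have "Lim (at_right 0) (\<lambda>\<epsilon>. gP \<phi> x y \<epsilon>) = (SUP \<epsilon>\<in>{0<..}. gP \<phi> x y \<epsilon>)"
    by (intro tendsto_Lim) auto
  then show ?thesis by (simp add: peierls_def gP_def)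
qed

lemma gP_le_peierls: "\<epsilon> > 0 \<Longrightarrow> gP \<phi> x y \<epsilon> \<le> peierls \<phi> x y"
  unfolding peierls_SUP by (rule SUP_upper) auto

lemma peierls_lower:
  assumes sub: "subaction \<phi> u" and xy: "x \<in> Xsp" "y \<in> Xsp"
  shows "ereal (u y - u x) \<le> peierls \<phi> x y"
proof (rule ereal_le_epsilon2)
  fix e :: real assume e: "0 < e"
  have cont: "continuous_X u" using sub by (simp add: subaction_def)
  have e2: "e/2 > 0" using e by simp
  obtain d1 where d1: "d1 > 0" "\<forall>w\<in>Xsp. dX x w < d1 \<longrightarrow> \<bar>u w - u x\<bar> < e/2"
    using cont xy(1) e2 unfolding continuous_X_def by blast
  obtain d2 where d2: "d2 > 0" "\<forall>w\<in>Xsp. dX y w < d2 \<longrightarrow> \<bar>u w - u y\<bar> < e/2"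
    using cont xy(2) e2 unfolding continuous_X_def by blast
  define \<epsilon> where "\<epsilon> = min d1 d2"
  have \<epsilon>: "\<epsilon> > 0" using d1 d2 by (simp add: \<epsilon>_def)
  have "ereal (u y - u x - e) \<le> gP \<phi> x y \<epsilon>"
    unfolding gP_def
  proof (rule Liminf_bounded[OF always_eventually], rule allI, rule INF_greatest)
    fix n w assume "w \<in> Bset x y n \<epsilon>"
    then have w: "w \<in> Xsp" "dX x w < d1" "dX y ((shift ^^ n) w) < d2"
      by (auto simp: Bset_def \<epsilon>_def dX_sym[of y])
    have "\<bar>u w - u x\<bar> < e/2" using d1 w by blast
    moreover have "\<bar>u ((shift ^^ n) w) - u y\<bar> < e/2" using d2 w shift_Xsp by blast
    moreover have "birk \<phi> n w \<ge> u ((shift ^^ n) w) - u w" by (rule birk_lower[OF sub w(1)])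
    ultimately have "u y - u x - e \<le> birk \<phi> n w" unfolding abs_less_iff by linarith
    then show "ereal (u y - u x - e) \<le> ereal (birk \<phi> n w)" by simp
  qed
  also have "\<dots> \<le> peierls \<phi> x y" by (rule gP_le_peierls[OF \<epsilon>])
  finally show "ereal (u y - u x) \<le> peierls \<phi> x y + ereal e"
    by (cases "peierls \<phi> x y") auto
qed

definition cat :: "nat \<Rightarrow> (nat \<Rightarrow> real) \<Rightarrow> (nat \<Rightarrow> real) \<Rightarrow> (nat \<Rightarrow> real)" where
  "cat n a b = (\<lambda>i. if i < n then a i else b (i - n))"

lemma concat_point:
  assumes L: "L \<ge> 0" "\<forall>a\<in>Xsp. \<forall>b\<in>Xsp. \<bar>\<phi> a - \<phi> b\<bar> \<le> L * dX a b"
    and xs: "x \<in> Xsp" "z \<in> Xsp" "y \<in> Xsp"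
    and w1: "w1 \<in> Bset x z n \<eta>" and w2: "w2 \<in> Bset z y m \<eta>"
  shows "cat n w1 w2 \<in> Bset x y (n + m) (3 * \<eta>) \<and>
    birk \<phi> (n + m) (cat n w1 w2) \<le> birk \<phi> n w1 + birk \<phi> m w2 + 2 * L * \<eta>"
proof -
  let ?w = "cat n w1 w2"
  have w1': "w1 \<in> Xsp" "dX x w1 < \<eta>" "dX ((shift ^^ n) w1) z < \<eta>" using w1 by (auto simp: Bset_def)
  have w2': "w2 \<in> Xsp" "dX z w2 < \<eta>" "dX ((shift ^^ m) w2) y < \<eta>" using w2 by (auto simp: Bset_def)
  have \<eta>: "\<eta> > 0" using dX_nonneg[OF xs(1) w1'(1)] w1'(2) by linarith
  have wX: "?w \<in> Xsp" using w1'(1) w2'(1) by (auto simp: Xsp_def cat_def)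
  have sh: "(shift ^^ n) ?w = w2" by (simp add: shift_pow cat_def)
  have s1X: "(shift ^^ n) w1 \<in> Xsp" by (rule shift_Xsp[OF w1'(1)])
  have d0: "dX w2 ((shift ^^ n) w1) < 2 * \<eta>"
  proof -
    have "dX w2 ((shift ^^ n) w1) \<le> dX w2 z + dX z ((shift ^^ n) w1)"
      by (rule dX_triangle[OF w2'(1) s1X xs(2)])
    then show ?thesis using w1'(3) w2'(2) by (simp add: dX_sym)
  qed
  have close: "dX ((shift ^^ i) ?w) ((shift ^^ i) w1) \<le> 2 * \<eta> / 2 ^ (n - i)" if "i \<le> n" for i
  proof -
    have "dX ((shift ^^ i) ?w) ((shift ^^ i) w1)
        = dX ((shift ^^ (n - i)) ((shift ^^ i) ?w)) ((shift ^^ (n - i)) ((shift ^^ i) w1)) / 2 ^ (n - i)"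
      by (rule dX_agree[OF shift_Xsp[OF wX] shift_Xsp[OF w1'(1)]]) (simp add: shift_pow cat_def less_diff_conv)
    also have "(shift ^^ (n - i)) ((shift ^^ i) ?w) = (shift ^^ n) ?w"
      using that by (simp add: shift_pow)
    also have "(shift ^^ (n - i)) ((shift ^^ i) w1) = (shift ^^ n) w1"
      using that by (simp add: shift_pow)
    finally show ?thesis using d0 sh by (simp add: divide_right_mono)
  qed
  have bc: "birk \<phi> n ?w \<le> birk \<phi> n w1 + 2 * L * \<eta>"
  proof -
    have "birk \<phi> n ?w - birk \<phi> n w1 = (\<Sum>i<n. \<phi> ((shift ^^ i) ?w) - \<phi> ((shift ^^ i) w1))"
      by (simp add: birk_def sum_subtractf[symmetric])
    also have "\<dots> \<le> (\<Sum>i<n. L * (2 * \<eta> / 2 ^ (n - i)))"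
    proof (rule sum_mono)
      fix i assume "i \<in> {..<n}"
      then have "dX ((shift ^^ i) ?w) ((shift ^^ i) w1) \<le> 2 * \<eta> / 2 ^ (n - i)" by (intro close) auto
      then have "L * dX ((shift ^^ i) ?w) ((shift ^^ i) w1) \<le> L * (2 * \<eta> / 2 ^ (n - i))"
        using L(1) by (rule mult_left_mono)
      moreover have "\<bar>\<phi> ((shift ^^ i) ?w) - \<phi> ((shift ^^ i) w1)\<bar> \<le> L * dX ((shift ^^ i) ?w) ((shift ^^ i) w1)"
        using L(2) shift_Xsp[OF wX] shift_Xsp[OF w1'(1)] by blast
      ultimately show "\<phi> ((shift ^^ i) ?w) - \<phi> ((shift ^^ i) w1) \<le> L * (2 * \<eta> / 2 ^ (n - i))"
        by linarith
    qed
    also have "\<dots> = (2 * L * \<eta>) * (\<Sum>i<n. 1 / 2 ^ (n - i))"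
      by (simp add: sum_distrib_left mult_ac)
    also have "\<dots> \<le> (2 * L * \<eta>) * 1"
      using L(1) \<eta> geom_le1[of n] by (intro mult_left_mono) auto
    finally show ?thesis by simp
  qed
  have "birk \<phi> (n + m) ?w = birk \<phi> n ?w + birk \<phi> m w2"
    using birk_add[of \<phi> n m ?w] sh by simp
  with bc have B: "birk \<phi> (n + m) ?w \<le> birk \<phi> n w1 + birk \<phi> m w2 + 2 * L * \<eta>" by simp
  have "dX w1 ?w = dX ((shift ^^ n) w1) ((shift ^^ n) ?w) / 2 ^ n"
    by (rule dX_agree[OF w1'(1) wX]) (simp add: cat_def)
  also have "\<dots> \<le> dX ((shift ^^ n) w1) ((shift ^^ n) ?w)"
  proof -
    have "(1::real) \<le> 2 ^ n" by simp
    from mult_left_mono[OF this dX_nonneg[OF s1X shift_Xsp[OF wX, of n]]]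
    show ?thesis by (simp add: divide_le_eq)
  qed
  finally have "dX w1 ?w < 2 * \<eta>" using d0 sh by (simp add: dX_sym)
  moreover have "dX x ?w \<le> dX x w1 + dX w1 ?w" by (rule dX_triangle[OF xs(1) wX w1'(1)])
  ultimately have D1: "dX x ?w < 3 * \<eta>" using w1'(2) by linarith
  have "(shift ^^ (n + m)) ?w = (shift ^^ m) w2" by (simp add: shift_pow cat_def)
  then have D2: "dX ((shift ^^ (n + m)) ?w) y < 3 * \<eta>" using w2'(3) \<eta> by simp
  show ?thesis using wX D1 D2 B by (simp add: Bset_def)
qed


lemma gP_witness:
  assumes "gP \<phi> x z \<eta> < ereal p"
  shows "\<exists>n\<ge>N. \<exists>w\<in>Bset x z n \<eta>. birk \<phi> n w < p"
proof -
  have "(SUP N. INF n\<in>{N..}. (INF w\<in>Bset x z n \<eta>. ereal (birk \<phi> n w))) < ereal p"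
    using assms by (simp add: gP_def liminf_SUP_INF)
  then have "(INF n\<in>{N..}. (INF w\<in>Bset x z n \<eta>. ereal (birk \<phi> n w))) < ereal p"
    by (rule le_less_trans[OF SUP_upper, rotated]) simp
  then show ?thesis by (auto simp: INF_less_iff)
qed

lemma concat_bound:
  assumes L: "L \<ge> 0" "\<forall>a\<in>Xsp. \<forall>b\<in>Xsp. \<bar>\<phi> a - \<phi> b\<bar> \<le> L * dX a b"
    and xs: "x \<in> Xsp" "z \<in> Xsp" "y \<in> Xsp"
    and \<eta>: "3 * \<eta> \<le> \<epsilon>"
    and p: "gP \<phi> x z \<eta> < ereal p" and q: "gP \<phi> z y \<eta> < ereal q"
  shows "gP \<phi> x y \<epsilon> \<le> ereal (p + q + 2 * L * \<eta>)"
  unfolding gP_def liminf_SUP_INF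
proof (rule SUP_least)
  fix N
  obtain n w1 where n: "n \<ge> N" "w1 \<in> Bset x z n \<eta>" "birk \<phi> n w1 < p"
    using gP_witness[OF p, of N] by blast
  obtain m w2 where m: "w2 \<in> Bset z y m \<eta>" "birk \<phi> m w2 < q"
    using gP_witness[OF q, of N] by blast
  note cp = concat_point[OF L xs n(2) m(1)]
  have mem: "cat n w1 w2 \<in> Bset x y (n + m) \<epsilon>"
    using cp Bset_mono[OF \<eta>] by blast
  have "birk \<phi> (n + m) (cat n w1 w2) \<le> p + q + 2 * L * \<eta>"
    using cp n(3) m(2) by linarith
  then have "(INF w\<in>Bset x y (n + m) \<epsilon>. ereal (birk \<phi> (n + m) w)) \<le> ereal (p + q + 2 * L * \<eta>)"
    by (intro INF_lower2[OF mem]) simp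
  then show "(INF k\<in>{N..}. INF w\<in>Bset x y k \<epsilon>. ereal (birk \<phi> k w)) \<le> ereal (p + q + 2 * L * \<eta>)"
    by (rule INF_lower2[rotated]) (use n(1) in simp)
qed

lemma peierls_triangle:
  assumes lip: "lipschitz_X \<phi>" and sub: "subaction \<phi> u"
    and xs: "x \<in> Xsp" "z \<in> Xsp" "y \<in> Xsp"
  shows "peierls \<phi> x y \<le> peierls \<phi> x z + peierls \<phi> z y"
proof -
  obtain L0 where L0: "\<forall>a\<in>Xsp. \<forall>b\<in>Xsp. \<bar>\<phi> a - \<phi> b\<bar> \<le> L0 * dX a b"
    using lip unfolding lipschitz_X_def by blast
  define L where "L = max L0 0"
  have L: "L \<ge> 0" "\<forall>a\<in>Xsp. \<forall>b\<in>Xsp. \<bar>\<phi> a - \<phi> b\<bar> \<le> L * dX a b"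
  proof -
    show "L \<ge> 0" by (simp add: L_def)
    show "\<forall>a\<in>Xsp. \<forall>b\<in>Xsp. \<bar>\<phi> a - \<phi> b\<bar> \<le> L * dX a b"
    proof (intro ballI)
      fix a b assume ab: "a \<in> Xsp" "b \<in> Xsp"
      have "L0 * dX a b \<le> L * dX a b"
        by (rule mult_right_mono) (use dX_nonneg[OF ab] in \<open>auto simp: L_def\<close>)
      then show "\<bar>\<phi> a - \<phi> b\<bar> \<le> L * dX a b" using L0 ab by fastforce
    qed
  qed
  have lA: "ereal (u z - u x) \<le> peierls \<phi> x z" by (rule peierls_lower[OF sub xs(1,2)])
  have lB: "ereal (u y - u z) \<le> peierls \<phi> z y" by (rule peierls_lower[OF sub xs(2,3)])
  show ?thesis
  proof (cases "peierls \<phi> x z = \<infinity> \<or> peierls \<phi> z y = \<infinity>")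
    case True then show ?thesis by auto
  next
    case False
    then obtain ra rb where A: "peierls \<phi> x z = ereal ra" and B: "peierls \<phi> z y = ereal rb"
      using lA lB by (cases "peierls \<phi> x z"; cases "peierls \<phi> z y") auto
    have "peierls \<phi> x y \<le> ereal (ra + rb)"
      unfolding peierls_SUP[of \<phi> x y]
    proof (rule SUP_least)
      fix \<epsilon> :: real assume "\<epsilon> \<in> {0<..}"
      then have \<epsilon>: "\<epsilon> > 0" by simp
      show "gP \<phi> x y \<epsilon> \<le> ereal (ra + rb)"
      proof (rule ereal_le_epsilon2)
        fix e :: real assume e: "e > 0"
        define \<eta> where "\<eta> = min (\<epsilon> / 3) (e / (6 * (L + 1)))"
        have \<eta>0: "\<eta> > 0" using \<epsilon> e L(1) by (simp add: \<eta>_def)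
        have \<eta>1: "3 * \<eta> \<le> \<epsilon>" by (simp add: \<eta>_def)
        have "\<eta> \<le> e / (6 * (L + 1))" by (simp add: \<eta>_def)
        then have "\<eta> * (6 * (L + 1)) \<le> e" using L(1) by (simp add: le_divide_eq)
        moreover have "L * \<eta> \<le> (L + 1) * \<eta>" using \<eta>0 by simp
        ultimately have \<eta>2: "2 * L * \<eta> \<le> e / 3" by (simp add: algebra_simps)
        have "gP \<phi> x z \<eta> \<le> ereal ra" using gP_le_peierls[OF \<eta>0, of \<phi> x z] A by simp
        also have "\<dots> < ereal (ra + e / 3)" using e by simp
        finally have p: "gP \<phi> x z \<eta> < ereal (ra + e / 3)" .
        have "gP \<phi> z y \<eta> \<le> ereal rb" using gP_le_peierls[OF \<eta>0, of \<phi> z y] B by simp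
        also have "\<dots> < ereal (rb + e / 3)" using e by simp
        finally have q: "gP \<phi> z y \<eta> < ereal (rb + e / 3)" .
        have "gP \<phi> x y \<epsilon> \<le> ereal (ra + e / 3 + (rb + e / 3) + 2 * L * \<eta>)"
          by (rule concat_bound[OF L xs \<eta>1 p q])
        also have "\<dots> \<le> ereal (ra + rb) + ereal e" using \<eta>2 by simp
        finally show "gP \<phi> x y \<epsilon> \<le> ereal (ra + rb) + ereal e" .
      qed
    qed
    then show ?thesis using A B by simp
  qed
qed

theorem theorem2p14:
  fixes \<phi> u :: "(nat \<Rightarrow> real) \<Rightarrow> real" and x z :: "nat \<Rightarrow> real"
  assumes "lipschitz_X \<phi>"
    and "calibrated_subaction \<phi> u"
    and "x \<in> aubry \<phi>" and "z \<in> aubry \<phi>"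
    and "peierls \<phi> x z + peierls \<phi> z x = 0"
  shows "\<forall>y\<in>Xsp. peierls \<phi> x y + ereal (u x) = peierls \<phi> z y + ereal (u z)"
proof
  fix y assume y: "y \<in> Xsp"
  have sub: "subaction \<phi> u" using assms(2) by (simp add: calibrated_subaction_def)
  have x: "x \<in> Xsp" and z: "z \<in> Xsp" using assms(3,4) by (auto simp: aubry_def)
  have a1: "ereal (u z - u x) \<le> peierls \<phi> x z" by (rule peierls_lower[OF sub x z])
  have a2: "ereal (u x - u z) \<le> peierls \<phi> z x" by (rule peierls_lower[OF sub z x])
  have exz: "peierls \<phi> x z = ereal (u z - u x) \<and> peierls \<phi> z x = ereal (u x - u z)"
    using a1 a2 assms(5) by (cases "peierls \<phi> x z"; cases "peierls \<phi> z x") auto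
  have t1: "peierls \<phi> x y \<le> ereal (u z - u x) + peierls \<phi> z y"
    using peierls_triangle[OF assms(1) sub x z y] exz by simp
  have t2: "peierls \<phi> z y \<le> ereal (u x - u z) + peierls \<phi> x y"
    using peierls_triangle[OF assms(1) sub z x y] exz by simp
  have l1: "ereal (u y - u x) \<le> peierls \<phi> x y" by (rule peierls_lower[OF sub x y])
  have l2: "ereal (u y - u z) \<le> peierls \<phi> z y" by (rule peierls_lower[OF sub z y])
  show "peierls \<phi> x y + ereal (u x) = peierls \<phi> z y + ereal (u z)"
    using t1 t2 l1 l2 by (cases "peierls \<phi> x y"; cases "peierls \<phi> z y") auto
qed

end
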